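(* Let $G$ be a simple directed graph and $\sigma$ a set of its nodes. If $\sigma$ contains a clique of size $|\sigma|-1$ and $\sigma$ is not a clique, then $\sigma$ is not a stable motif (for any CTLN $W(G,\varepsilon,\delta)$ with legal parameters).
   Context: A clique is a set of nodes pairwise bidirectionally connected. Legal parameters: $\delta>0$, $0<\varepsilon<\frac{\delta}{\delta+1}$. $W=W(G,\varepsilon,\delta)$ has $W_{ii}=0$, $W_{ij}=-1+\varepsilon$ if $j\to i$, $W_{ij}=-1-\delta$ if $i\ne j$, $j\not\to i$; dynamics $\dot x_i=-x_i+[\sum_jW_{ij}x_j+\theta]_+$, $\theta>0$; CTLNs assumed nondegenerate ($\det(I-W_\sigma)\neq0$, Cramer determinants nonzero). $W_\sigma$ is the principal submatrix on $\sigma$. $\sigma$ is a permitted motif if $\theta(I-W_\sigma)^{-1}1_\sigma$ has all entries positive; a stable motif if permitted and all eigenvalues of $I-W_\sigma$ have positive real part. *)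

theory Defs
  imports "Jordan_Normal_Form.Matrix" "Jordan_Normal_Form.DL_Submatrix"
          "Jordan_Normal_Form.Char_Poly" "Jordan_Normal_Form.Determinant"
begin

(* Nodes of a graph on n nodes are 0..n-1.  E j i means the edge j -> i.
   A simple directed graph: no self-loops (at most one edge per ordered pair
   is automatic for a relation). *)
definition simple_digraph :: "nat \<Rightarrow> (nat \<Rightarrow> nat \<Rightarrow> bool) \<Rightarrow> bool" where
  "simple_digraph n E \<longleftrightarrow> (\<forall>i. \<not> E i i)"

definition is_clique :: "(nat \<Rightarrow> nat \<Rightarrow> bool) \<Rightarrow> nat set \<Rightarrow> bool" where
  "is_clique E K \<longleftrightarrow> (\<forall>i\<in>K. \<forall>j\<in>K. i \<noteq> j \<longrightarrow> E i j \<and> E j i)"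

definition legal_params :: "real \<Rightarrow> real \<Rightarrow> bool" where
  "legal_params \<epsilon> \<delta> \<longleftrightarrow> \<delta> > 0 \<and> 0 < \<epsilon> \<and> \<epsilon> < \<delta> / (\<delta> + 1)"

definition ctln_W :: "nat \<Rightarrow> (nat \<Rightarrow> nat \<Rightarrow> bool) \<Rightarrow> real \<Rightarrow> real \<Rightarrow> real mat" where
  "ctln_W n E \<epsilon> \<delta> = mat n n (\<lambda>(i,j). if i = j then 0
                                      else if E j i then -1 + \<epsilon> else -1 - \<delta>)"

definition I_minus_W_sub :: "real mat \<Rightarrow> nat set \<Rightarrow> real mat" where
  "I_minus_W_sub W \<sigma> = 1\<^sub>m (dim_row (submatrix W \<sigma> \<sigma>)) - submatrix W \<sigma> \<sigma>"

definition cramer_mat :: "real mat \<Rightarrow> nat \<Rightarrow> real mat" where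
  "cramer_mat M i = mat (dim_row M) (dim_col M) (\<lambda>(r,c). if c = i then 1 else M $$ (r,c))"

definition nondegenerate :: "nat \<Rightarrow> real mat \<Rightarrow> bool" where
  "nondegenerate n W \<longleftrightarrow>
     (\<forall>\<tau>. \<tau> \<subseteq> {..<n} \<and> \<tau> \<noteq> {} \<longrightarrow>
        det (I_minus_W_sub W \<tau>) \<noteq> 0 \<and>
        (\<forall>i < card \<tau>. det (cramer_mat (I_minus_W_sub W \<tau>) i) \<noteq> 0))"

definition permitted_motif :: "real mat \<Rightarrow> real \<Rightarrow> nat set \<Rightarrow> bool" where
  "permitted_motif W \<theta> \<sigma> \<longleftrightarrow>
     (let M = I_minus_W_sub W \<sigma>; m = dim_row M in
      \<exists>B \<in> carrier_mat m m. M * B = 1\<^sub>m m \<and> B * M = 1\<^sub>m m \<and>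
        (\<forall>i < m. (\<theta> \<cdot>\<^sub>v (B *\<^sub>v vec m (\<lambda>_. 1))) $ i > 0))"

definition stable_motif :: "real mat \<Rightarrow> real \<Rightarrow> nat set \<Rightarrow> bool" where
  "stable_motif W \<theta> \<sigma> \<longleftrightarrow>
     permitted_motif W \<theta> \<sigma> \<and>
     (\<forall>z::complex. eigenvalue (map_mat complex_of_real (I_minus_W_sub W \<sigma>)) z \<longrightarrow> Re z > 0)"

end

theory Submission
  imports Defs
begin

lemma row_K:
  fixes M :: "real mat"
  assumes M: "M \<in> carrier_mat k k"
    and ent: "\<And>i j. i<k \<Longrightarrow> j<k \<Longrightarrow> i\<noteq>pv \<Longrightarrow> j\<noteq>pv \<Longrightarrow> M$$(i,j) = (if i=j then 1 else 1-\<epsilon>)"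
    and w: "w \<in> carrier_vec k" and i: "i<k" "i\<noteq>pv" and pv: "pv<k"
  shows "(M *\<^sub>v w)$i = \<epsilon> * w$i + (1-\<epsilon>) * (\<Sum>j\<in>{..<k}-{pv}. w$j) + M$$(i,pv) * w$pv"
proof -
  have "(M *\<^sub>v w)$i = (\<Sum>j<k. M$$(i,j) * w$j)"
    using M w i by (auto simp add: mult_mat_vec_def scalar_prod_def lessThan_atLeast0 intro!: sum.cong)
  also have "\<dots> = M$$(i,pv)*w$pv + (\<Sum>j\<in>{..<k}-{pv}. M$$(i,j)*w$j)"
    using pv by (simp add: sum.remove)
  also have "(\<Sum>j\<in>{..<k}-{pv}. M$$(i,j)*w$j) = (\<Sum>j\<in>{..<k}-{pv}. (1-\<epsilon>)*w$j + (if j = i then \<epsilon> * w$j else 0))"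
    by (rule sum.cong) (auto simp: ent i algebra_simps)
  also have "\<dots> = (1-\<epsilon>)*(\<Sum>j\<in>{..<k}-{pv}. w$j) + \<epsilon>*w$i"
    using i by (simp add: sum.distrib sum_distrib_left)
  finally show ?thesis by simp
qed

lemma row_pv:
  fixes M :: "real mat"
  assumes M: "M \<in> carrier_mat k k" and d: "M$$(pv,pv) = 1"
    and w: "w \<in> carrier_vec k" and pv: "pv<k"
  shows "(M *\<^sub>v w)$pv = (\<Sum>j\<in>{..<k}-{pv}. M$$(pv,j) * w$j) + w$pv"
proof -
  have "(M *\<^sub>v w)$pv = (\<Sum>j<k. M$$(pv,j) * w$j)"
    using M w pv by (auto simp add: mult_mat_vec_def scalar_prod_def lessThan_atLeast0 intro!: sum.cong)
  also have "\<dots> = M$$(pv,pv)*w$pv + (\<Sum>j\<in>{..<k}-{pv}. M$$(pv,j)*w$j)"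
    using pv by (simp add: sum.remove)
  finally show ?thesis using d by simp
qed

lemma core:
  fixes M :: "real mat" and F :: "nat \<Rightarrow> nat \<Rightarrow> bool" and x :: "real vec"
  assumes M: "M \<in> carrier_mat k k"
    and ent: "\<And>i j. i<k \<Longrightarrow> j<k \<Longrightarrow> M$$(i,j) = (if i=j then 1 else if F j i then 1-\<epsilon> else 1+\<delta>)"
    and pv: "pv<k"
    and cl: "\<And>i j. i<k \<Longrightarrow> j<k \<Longrightarrow> i\<noteq>j \<Longrightarrow> i\<noteq>pv \<Longrightarrow> j\<noteq>pv \<Longrightarrow> F i j"
    and u: "u<k" "u\<noteq>pv" "\<not>(F u pv \<and> F pv u)"
    and par: "0<\<epsilon>" "\<epsilon><1" "0<\<delta>"
    and x: "x \<in> carrier_vec k" "M *\<^sub>v x = vec k (\<lambda>_. 1)" "\<And>i. i<k \<Longrightarrow> x$i > 0"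
  shows "\<exists>t>0. \<exists>z. z \<in> carrier_vec k \<and> z$pv \<noteq> 0 \<and> M *\<^sub>v z = (-t) \<cdot>\<^sub>v z"
proof -
  define K where "K = {..<k}-{pv}"
  define a where "a = 1-\<epsilon>"
  define b where "b j = M$$(j,pv)" for j
  define c where "c j = M$$(pv,j)" for j
  have finK: "finite K" unfolding K_def by simp
  have uK: "u \<in> K" using u unfolding K_def by simp
  have apos: "a > 0" using par unfolding a_def by simp
  have entK: "\<And>i j. i<k \<Longrightarrow> j<k \<Longrightarrow> i\<noteq>pv \<Longrightarrow> j\<noteq>pv \<Longrightarrow> M$$(i,j) = (if i=j then 1 else 1-\<epsilon>)"
    using ent cl by auto
  have bpos: "\<And>j. j \<in> K \<Longrightarrow> b j > 0" and cpos: "\<And>j. j \<in> K \<Longrightarrow> c j \<ge> a"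
    using ent pv par unfolding K_def b_def c_def a_def by auto
  have rowK: "\<And>w i. w \<in> carrier_vec k \<Longrightarrow> i \<in> K \<Longrightarrow> (M *\<^sub>v w)$i = \<epsilon>*w$i + a*(\<Sum>j\<in>K. w$j) + b i * w$pv"
    unfolding K_def a_def b_def using row_K[OF M entK _ _ _ pv] by auto
  have rowpv: "\<And>w. w \<in> carrier_vec k \<Longrightarrow> (M *\<^sub>v w)$pv = (\<Sum>j\<in>K. c j * w$j) + w$pv"
    unfolding K_def c_def using row_pv[OF M _ _ pv] ent pv by auto
  define y where "y = x$pv"
  define s where "s = (\<Sum>j\<in>K. x$j)"
  have ypos: "y > 0" using x pv unfolding y_def by auto
  have ex: "\<And>i. i \<in> K \<Longrightarrow> \<epsilon>*x$i + a*s + b i*y = 1"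
  proof -
    fix i assume i: "i \<in> K"
    have "(M *\<^sub>v x)$i = 1" using x(2) i unfolding K_def by simp
    then show "\<epsilon>*x$i + a*s + b i*y = 1" using rowK[OF x(1) i] unfolding s_def y_def by simp
  qed
  have epv: "(\<Sum>j\<in>K. c j * x$j) + y = 1"
    using rowpv[OF x(1)] x(2) pv unfolding y_def by simp
  define m where "m = real (card K)"
  define B where "B = (\<Sum>j\<in>K. b j)"
  define C where "C = (\<Sum>j\<in>K. c j)"
  define cb where "cb = (\<Sum>j\<in>K. c j * b j)"
  define \<mu> where "\<mu> = a*m+\<epsilon>"
  have E1: "\<epsilon>*s + a*m*s + B*y = m"
  proof -
    have "(\<Sum>i\<in>K. \<epsilon>*x$i + a*s + b i*y) = (\<Sum>i\<in>K. 1)" using ex by (rule sum.cong[OF refl])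
    then show ?thesis unfolding m_def B_def s_def
      by (simp add: sum.distrib sum_distrib_left sum_distrib_right algebra_simps)
  qed
  have E2: "\<epsilon>*(1-y) + a*C*s + cb*y = C"
  proof -
    have "(\<Sum>i\<in>K. c i * (\<epsilon>*x$i + a*s + b i*y)) = (\<Sum>i\<in>K. c i * 1)" using ex by (intro sum.cong) auto
    then have "\<epsilon>*(\<Sum>i\<in>K. c i * x$i) + a*C*s + cb*y = C" unfolding C_def cb_def
      by (simp add: sum.distrib sum_distrib_left sum_distrib_right algebra_simps)
    moreover have "(\<Sum>i\<in>K. c i * x$i) = 1 - y" using epv by simp
    ultimately show ?thesis by simp
  qed
  show ?thesis
  proof (cases "\<forall>j\<in>K. F j pv")
    case True
    then have cK: "\<And>j. j\<in>K \<Longrightarrow> c j = a" unfolding c_def a_def K_def using ent pv by auto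
    have "(\<Sum>j\<in>K. c j * x$j) = a * s" unfolding s_def sum_distrib_left using cK by simp
    with epv have r1: "a*s + y = 1" by simp
    have "\<not> F pv u" using True uK u(3) by blast
    then have "b u = 1+\<delta>" unfolding b_def using ent u pv by auto
    with ex[OF uK] have "\<epsilon>*x$u + a*s + (1+\<delta>)*y = 1" by simp
    with r1 have "\<epsilon>*x$u + \<delta>*y = 0" by (simp add: algebra_simps)
    moreover have "\<epsilon>*x$u > 0" using x(3)[OF u(1)] par by simp
    moreover have "\<delta>*y > 0" using ypos par by simp
    ultimately show ?thesis by simp
  next
    case False
    then obtain w where wK: "w \<in> K" and nw: "\<not> F w pv" by blast
    have cw: "c w = 1+\<delta>" unfolding c_def using ent nw wK pv unfolding K_def by auto
    have "C - a*m = (\<Sum>j\<in>K. c j - a)" unfolding C_def m_def by (simp add: sum_subtractf)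
    also have "\<dots> \<ge> c w - a"
      by (rule member_le_sum[OF wK]) (use cpos finK in auto)
    finally have Cgt: "C - \<mu> \<ge> \<delta>" unfolding \<mu>_def cw a_def by simp
    define a0 where "a0 = \<epsilon>*\<mu> - \<mu>*cb + a*B*C"
    have ms: "\<mu>*s = m - B*y" using E1 unfolding \<mu>_def by (simp add: algebra_simps)
    have key: "a0*y = \<epsilon>*(\<mu>-C)"
    proof -
      have h1: "\<mu>*(\<epsilon>*(1-y) + a*C*s + cb*y) - \<mu>*C = 0" using E2 by simp
      have h2: "\<mu>*s - (m - B*y) = 0" using ms by simp
      have "a0*y - \<epsilon>*(\<mu>-C) = -(\<mu>*(\<epsilon>*(1-y) + a*C*s + cb*y) - \<mu>*C) + a*C*(\<mu>*s - (m - B*y))"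
        unfolding a0_def \<mu>_def by (simp add: algebra_simps)
      then show ?thesis unfolding h1 h2 by simp
    qed
    have "a0*y < 0" using key Cgt par by (simp add: mult_pos_neg)
    then have a0neg: "a0 < 0" using ypos by (simp add: mult_less_0_iff)
    have Bpos: "B > 0" unfolding B_def using bpos uK finK by (intro sum_pos) auto
    have Cpos: "C > 0" unfolding C_def using cpos apos uK finK by (intro sum_pos) (auto intro: less_le_trans)
    have cbpos: "cb > 0" unfolding cb_def using cpos bpos apos uK finK
      by (intro sum_pos) (auto intro!: mult_pos_pos intro: less_le_trans)
    have mpos: "m \<ge> 0" unfolding m_def by simp
    have mupos: "\<mu> > 0" unfolding \<mu>_def using apos mpos par by (simp add: add_nonneg_pos)
    define g where "g t = -a*B*C + (\<mu>+t)*(cb - (1+t)*(\<epsilon>+t))" for t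
    define T where "T = cb + 1"
    have g0: "g 0 > 0" using a0neg unfolding g_def a0_def by (simp add: algebra_simps)
    have "g T < 0"
    proof -
      have "(1+T)*(\<epsilon>+T) > T*T" unfolding T_def using cbpos par by (intro mult_strict_mono) auto
      moreover have "T*T \<ge> cb" unfolding T_def using cbpos by (simp add: algebra_simps)
      ultimately have "cb - (1+T)*(\<epsilon>+T) < 0" by simp
      moreover have "\<mu>+T > 0" using mupos cbpos unfolding T_def by simp
      ultimately have "(\<mu>+T)*(cb - (1+T)*(\<epsilon>+T)) < 0" by (simp add: mult_pos_neg)
      moreover have "a*B*C > 0" using apos Bpos Cpos by simp
      ultimately show ?thesis unfolding g_def by simp
    qed
    have "continuous_on {0..T} g" unfolding g_def by (intro continuous_intros)
    then obtain t where t: "0 \<le> t" "t \<le> T" "g t = 0"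
      using IVT2'[of g T 0 0] \<open>g T < 0\<close> g0 cbpos unfolding T_def by auto
    have tpos: "t > 0" using t g0 by (cases "t = 0") auto
    have mut: "\<mu>+t > 0" using mupos tpos by simp
    define \<alpha> where "\<alpha> = -a*B/(\<mu>+t)"
    have al: "(\<mu>+t)*\<alpha> = -a*B" unfolding \<alpha>_def using mut by simp
    have third: "C*\<alpha> + cb - (1+t)*(\<epsilon>+t) = 0"
    proof -
      have "(\<mu>+t)*(C*\<alpha> + cb - (1+t)*(\<epsilon>+t)) = C*((\<mu>+t)*\<alpha>) + (\<mu>+t)*(cb - (1+t)*(\<epsilon>+t))"
        by (simp add: algebra_simps)
      also have "\<dots> = g t" unfolding al g_def by simp
      finally show ?thesis using t(3) mut by simp
    qed
    define z where "z = vec k (\<lambda>j. if j = pv then -(\<epsilon>+t) else \<alpha> + b j)"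
    have zc: "z \<in> carrier_vec k" unfolding z_def by simp
    have zK: "\<And>j. j \<in> K \<Longrightarrow> z$j = \<alpha> + b j" unfolding z_def K_def by auto
    have zpv: "z$pv = -(\<epsilon>+t)" unfolding z_def using pv by simp
    have sz: "(\<Sum>j\<in>K. z$j) = m*\<alpha> + B"
    proof -
      have "(\<Sum>j\<in>K. z$j) = (\<Sum>j\<in>K. \<alpha> + b j)" using zK by simp
      then show ?thesis unfolding m_def B_def by (simp add: sum.distrib)
    qed
    have "M *\<^sub>v z = (-t) \<cdot>\<^sub>v z"
    proof (rule eq_vecI)
      show "dim_vec (M *\<^sub>v z) = dim_vec ((-t) \<cdot>\<^sub>v z)" using M zc by simp
      fix i assume "i < dim_vec ((-t) \<cdot>\<^sub>v z)"
      then have i: "i < k" using zc by simp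
      show "(M *\<^sub>v z) $ i = ((-t) \<cdot>\<^sub>v z) $ i"
      proof (cases "i = pv")
        case True
        have "(\<Sum>j\<in>K. c j * z$j) = (\<Sum>j\<in>K. \<alpha> * c j + c j * b j)" using zK by (simp add: algebra_simps)
        also have "\<dots> = C*\<alpha> + cb" unfolding C_def cb_def by (simp add: sum.distrib sum_distrib_left mult.commute)
        finally have "(M *\<^sub>v z)$pv = C*\<alpha> + cb - (\<epsilon>+t)" using rowpv[OF zc] zpv by simp
        also have "\<dots> = -t * z$pv" using third unfolding zpv by (simp add: algebra_simps)
        finally show ?thesis using True i zc by simp
      next
        case False
        then have iK: "i \<in> K" using i unfolding K_def by simp
        have "(M *\<^sub>v z)$i = \<epsilon>*(\<alpha> + b i) + a*(m*\<alpha> + B) + b i * (-(\<epsilon>+t))"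
          using rowK[OF zc iK] zK[OF iK] sz zpv by simp
        also have "\<dots> = ((\<mu>+t)*\<alpha> + a*B) - t*\<alpha> - t * b i" unfolding \<mu>_def by (simp add: algebra_simps)
        also have "\<dots> = -t * z$i" using al zK[OF iK] by (simp add: algebra_simps)
        finally show ?thesis using i zc by simp
      qed
    qed
    then show ?thesis using tpos zc zpv par by (intro exI[of _ t] conjI exI[of _ z]) auto
  qed
qed

theorem proposition2:
  fixes n :: nat and E :: "nat \<Rightarrow> nat \<Rightarrow> bool" and \<sigma> :: "nat set"
    and \<epsilon> \<delta> \<theta> :: real
  assumes "simple_digraph n E"
    and "\<sigma> \<subseteq> {..<n}"
    and "legal_params \<epsilon> \<delta>"
    and "\<theta> > 0"
    and "nondegenerate n (ctln_W n E \<epsilon> \<delta>)"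
    and "\<exists>K \<subseteq> \<sigma>. card K = card \<sigma> - 1 \<and> is_clique E K"
    and "\<not> is_clique E \<sigma>"
  shows "\<not> stable_motif (ctln_W n E \<epsilon> \<delta>) \<theta> \<sigma>"
proof
  assume st: "stable_motif (ctln_W n E \<epsilon> \<delta>) \<theta> \<sigma>"
  define W where "W = ctln_W n E \<epsilon> \<delta>"
  define M where "M = I_minus_W_sub W \<sigma>"
  define k where "k = card \<sigma>"
  have fin: "finite \<sigma>" using assms(2) finite_subset by blast
  have dW: "dim_row W = n" "dim_col W = n" unfolding W_def ctln_W_def by auto
  have setl: "{i. i<n \<and> i\<in>\<sigma>} = \<sigma>" using assms(2) by auto
  have dsub: "dim_row (submatrix W \<sigma> \<sigma>) = k" "dim_col (submatrix W \<sigma> \<sigma>) = k"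
    unfolding dim_submatrix dW setl k_def by auto
  have Mc: "M \<in> carrier_mat k k" unfolding M_def I_minus_W_sub_def using dsub by auto
  have pin: "\<And>i. i < k \<Longrightarrow> pick \<sigma> i \<in> \<sigma>" unfolding k_def by (rule pick_in_set_le)
  have pinj: "\<And>i j. i < k \<Longrightarrow> j < k \<Longrightarrow> pick \<sigma> i = pick \<sigma> j \<longleftrightarrow> i = j"
    by (metis k_def nat_neq_iff pick_mono less_irrefl)
  have Ment: "\<And>i j. i<k \<Longrightarrow> j<k \<Longrightarrow> M$$(i,j) =
      (if i=j then 1 else if E (pick \<sigma> j) (pick \<sigma> i) then 1-\<epsilon> else 1+\<delta>)"
  proof -
    fix i j assume i: "i<k" and j: "j<k"
    have "M$$(i,j) = (1\<^sub>m k) $$ (i,j) - submatrix W \<sigma> \<sigma> $$ (i,j)"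
      unfolding M_def I_minus_W_sub_def using dsub i j by simp
    also have "submatrix W \<sigma> \<sigma> $$ (i,j) = W $$ (pick \<sigma> i, pick \<sigma> j)"
      by (rule submatrix_index) (use i j dW setl k_def in auto)
    also have "W $$ (pick \<sigma> i, pick \<sigma> j) = (if pick \<sigma> i = pick \<sigma> j then 0
        else if E (pick \<sigma> j) (pick \<sigma> i) then -1 + \<epsilon> else -1 - \<delta>)"
    proof -
      have "pick \<sigma> i < n" "pick \<sigma> j < n" using pin[OF i] pin[OF j] assms(2) by auto
      then show ?thesis unfolding W_def ctln_W_def by simp
    qed
    finally show "M$$(i,j) = (if i=j then 1 else if E (pick \<sigma> j) (pick \<sigma> i) then 1-\<epsilon> else 1+\<delta>)"
      using pinj[OF i j] i j by auto
  qed
  obtain K where K: "K \<subseteq> \<sigma>" "card K = card \<sigma> - 1" "is_clique E K" using assms(6) by blast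
  have ne: "\<sigma> \<noteq> {}" using assms(7) unfolding is_clique_def by auto
  then have "card \<sigma> > 0" using fin by auto
  then have "K \<noteq> \<sigma>" using K by auto
  then obtain v where v: "v \<in> \<sigma>" "v \<notin> K" using K by auto
  have "K \<subseteq> \<sigma> - {v}" using K v by auto
  moreover have "card (\<sigma> - {v}) = card K" using K v fin by simp
  ultimately have Keq: "K = \<sigma> - {v}" using fin by (intro card_subset_eq) auto
  obtain i j where ij: "i \<in> \<sigma>" "j \<in> \<sigma>" "i \<noteq> j" "\<not>(E i j \<and> E j i)"
    using assms(7) unfolding is_clique_def by blast
  obtain u where u: "u \<in> K" "\<not>(E u v \<and> E v u)"
  proof (cases "i = v")
    case True then show ?thesis using that[of j] ij Keq by auto
  next
    case False
    then have iK: "i \<in> K" using Keq ij by auto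
    show ?thesis
    proof (cases "j = v")
      case True then show ?thesis using that[of i] ij iK by auto
    next
      case False
      then have "j \<in> K" using Keq ij by auto
      then show ?thesis using K(3) iK ij unfolding is_clique_def by blast
    qed
  qed
  define pv where "pv = card {a\<in>\<sigma>. a < v}"
  define pu where "pu = card {a\<in>\<sigma>. a < u}"
  have pickv: "pick \<sigma> pv = v" unfolding pv_def using v(1) by (rule pick_card_in_set)
  have "u \<in> \<sigma>" using u K by auto
  then have picku: "pick \<sigma> pu = u" unfolding pu_def by (rule pick_card_in_set)
  have pvk: "pv < k" unfolding pv_def k_def using v fin by (intro psubset_card_mono) auto
  have puk: "pu < k" unfolding pu_def k_def using \<open>u \<in> \<sigma>\<close> fin by (intro psubset_card_mono) auto
  have pupv: "pu \<noteq> pv" using picku pickv u Keq by auto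
  define F where "F j i = E (pick \<sigma> j) (pick \<sigma> i)" for i j
  have cl: "\<And>i j. i<k \<Longrightarrow> j<k \<Longrightarrow> i\<noteq>j \<Longrightarrow> i\<noteq>pv \<Longrightarrow> j\<noteq>pv \<Longrightarrow> F i j"
  proof -
    fix i j assume h: "i<k" "j<k" "i\<noteq>j" "i\<noteq>pv" "j\<noteq>pv"
    have "pick \<sigma> i \<in> K" "pick \<sigma> j \<in> K" "pick \<sigma> i \<noteq> pick \<sigma> j"
      using h pin pinj[OF h(1) pvk] pinj[OF h(2) pvk] pinj[OF h(1,2)] pickv Keq by auto
    then show "F i j" using K(3) unfolding F_def is_clique_def by auto
  qed
  have par: "0<\<epsilon>" "\<epsilon><1" "0<\<delta>"
  proof -
    have "\<delta> > 0" "0 < \<epsilon>" "\<epsilon> < \<delta>/(\<delta>+1)" using assms(3) unfolding legal_params_def by auto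
    moreover have "\<delta>/(\<delta>+1) < 1" using \<open>\<delta> > 0\<close> by simp
    ultimately show "0<\<epsilon>" "\<epsilon><1" "0<\<delta>" by linarith+
  qed
  have dM: "dim_row M = k" using Mc by simp
  from st obtain B where B: "B \<in> carrier_mat k k" "M * B = 1\<^sub>m k"
      "\<forall>i < k. (\<theta> \<cdot>\<^sub>v (B *\<^sub>v vec k (\<lambda>_. 1))) $ i > 0"
    unfolding stable_motif_def permitted_motif_def Let_def M_def[symmetric] W_def[symmetric] dM by blast
  define x where "x = B *\<^sub>v vec k (\<lambda>_. (1::real))"
  have xc: "x \<in> carrier_vec k" unfolding x_def using B by simp
  have Mx: "M *\<^sub>v x = vec k (\<lambda>_. 1)"
    unfolding x_def using B Mc by (simp add: assoc_mult_mat_vec[symmetric])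
  have xpos: "\<And>i. i<k \<Longrightarrow> x$i > 0"
  proof -
    fix i assume i: "i<k"
    have "\<theta> * x$i > 0" using B(3) i xc unfolding x_def by (metis carrier_vecD index_smult_vec(1))
    then show "x$i > 0" using assms(4) by (simp add: zero_less_mult_iff)
  qed
  have Ment': "\<And>i j. i<k \<Longrightarrow> j<k \<Longrightarrow> M$$(i,j) = (if i=j then 1 else if F j i then 1-\<epsilon> else 1+\<delta>)"
    unfolding F_def using Ment by simp
  have "\<not>(F pu pv \<and> F pv pu)" unfolding F_def picku pickv using u by auto
  from core[OF Mc Ment' pvk cl puk pupv this par xc Mx xpos]
  obtain t z where tz: "t > 0" "z \<in> carrier_vec k" "z$pv \<noteq> 0" "M *\<^sub>v z = (-t) \<cdot>\<^sub>v z" by blast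
  have "z \<noteq> 0\<^sub>v k" using tz pvk by auto
  then have "eigenvalue M (-t)" unfolding eigenvalue_def eigenvector_def using tz Mc by auto
  from of_real_hom.eigenvalue_hom[OF Mc this]
  have "eigenvalue (map_mat complex_of_real M) (complex_of_real (-t))" .
  with st have "Re (complex_of_real (-t)) > 0" unfolding stable_motif_def M_def W_def by blast
  with tz show False by simp
qed

end
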